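(* In the setting below, every $p\in X$, written $p=\sum_{e_i\in S_p}\lambda_ie_i$ (normalized so that $\min_{e_i\in S_p}\lambda_i=1$), satisfies $\lambda_i=1$ for all $e_i\in S_p$ except for at most one index $j$, for which $\lambda_j>1$.
   Context: Setting: $E=\{e_0,\dots,e_n\}\subset\mathbb R^n$ is the vertex set of an $n$-simplex with $e_0+\cdots+e_n=0$, and $X\subset\mathbb R^n\setminus\{0\}$ is a finite set with $E\subseteq X$, no element of $X$ a positive multiple of another, such that every $n+1$ points of $X$ are in good position. (A finite set $A$ is in conical position if $0\notin\operatorname{conv}A$ and no point of $A$ lies in the positive hull—set of nonnegative linear combinations—of the other points; it is in good position otherwise.) For $p\in X$, the support $S_p$ is the minimal subset of $E$ whose positive hull contains $p$; then $p=\sum_{e_i\in S_p}\lambda_ie_i$ uniquely with all $\lambda_i>0$. Convention: each $p\in X$ is replaced by the positive multiple for which $\min_{e_i\in S_p}\lambda_i=1$ (this does not affect the hypotheses). *)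

theory Defs
  imports "HOL-Analysis.Analysis"
begin

definition pos_hull :: "'a::real_vector set \<Rightarrow> 'a set" where
  "pos_hull A = {(\<Sum>a\<in>A. c a *\<^sub>R a) | c. \<forall>a\<in>A. c a \<ge> 0}"

definition conical_position :: "'a::real_vector set \<Rightarrow> bool" where
  "conical_position A \<longleftrightarrow> finite A \<and> 0 \<notin> convex hull A \<and>
     (\<forall>a\<in>A. a \<notin> pos_hull (A - {a}))"

definition good_position :: "'a::real_vector set \<Rightarrow> bool" where
  "good_position A \<longleftrightarrow> \<not> conical_position A"

end

theory Submission
  imports Defs
begin

lemma pos_hull_sep:
  fixes f :: "'a::real_vector \<Rightarrow> real"
  assumes "linear f" "f a > 0" "\<forall>b\<in>B. f b \<le> 0"
  shows "a \<notin> pos_hull B"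
proof
  assume "a \<in> pos_hull B"
  then obtain c where c: "\<forall>b\<in>B. c b \<ge> 0" and a: "a = (\<Sum>b\<in>B. c b *\<^sub>R b)"
    unfolding pos_hull_def by blast
  have "f a = (\<Sum>b\<in>B. f (c b *\<^sub>R b))"
    unfolding a by (rule linear_sum[OF assms(1)])
  also have "\<dots> = (\<Sum>b\<in>B. c b * f b)"
    using linear_scale[OF assms(1)] by simp
  also have "\<dots> \<le> 0"
    by (rule sum_nonpos) (use c assms(3) in \<open>simp add: mult_nonneg_nonpos\<close>)
  finally show False using assms(2) by simp
qed

lemma conv_sep:
  fixes A :: "'a::real_vector set"
  assumes "finite A" "\<forall>a\<in>A. \<exists>f::'a\<Rightarrow>real. linear f \<and> f a > 0 \<and> (\<forall>b\<in>A. f b \<ge> 0)"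
  shows "0 \<notin> convex hull A"
proof
  assume "0 \<in> convex hull A"
  then obtain u where u: "\<forall>x\<in>A. 0 \<le> u x" "sum u A = 1" "(\<Sum>x\<in>A. u x *\<^sub>R x) = 0"
    using convex_hull_finite[OF assms(1)] by auto
  have "\<forall>a\<in>A. u a = 0"
  proof
    fix a assume aA: "a \<in> A"
    then obtain f :: "'a\<Rightarrow>real" where f: "linear f" "f a > 0" "\<forall>b\<in>A. f b \<ge> 0" using assms(2) by blast
    have "0 = f (\<Sum>x\<in>A. u x *\<^sub>R x)" using u(3) linear_0[OF f(1)] by simp
    also have "\<dots> = (\<Sum>x\<in>A. f (u x *\<^sub>R x))"
      by (rule linear_sum[OF f(1)])
    also have "\<dots> = (\<Sum>x\<in>A. u x * f x)"
      using linear_scale[OF f(1)] by simp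
    finally have s: "(\<Sum>x\<in>A. u x * f x) = 0" by simp
    have "u a * f a \<le> (\<Sum>x\<in>A. u x * f x)"
      by (rule member_le_sum) (use aA u(1) f(3) assms(1) in auto)
    then have "u a * f a \<le> 0" using s by simp
    then show "u a = 0" using u(1) aA f(2)
      by (metis less_eq_real_def mult_le_0_iff not_less)
  qed
  then have "sum u A = 0" by simp
  then show False using u(2) by simp
qed

lemma indep_lemma:
  fixes e :: "nat \<Rightarrow> 'a::real_vector"
  assumes inj: "inj_on e {0..n}" and ind: "\<not> affine_dependent (e ` {0..n})"
    and sz: "(\<Sum>i=0..n. e i) = 0" and k: "k \<in> {0..n}"
  shows "independent (e ` ({0..n} - {k}))"
proof
  assume "dependent (e ` ({0..n} - {k}))"
  then obtain T U where T: "finite T" "T \<subseteq> e ` ({0..n} - {k})" "\<exists>v\<in>T. U v \<noteq> 0"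
     "(\<Sum>v\<in>T. U v *\<^sub>R v) = 0"
    unfolding dependent_explicit by blast
  define E where "E = e ` {0..n}"
  define s where "s = (\<Sum>v\<in>T. U v)"
  define b where "b v = (if v \<in> T then U v else 0) - s / (n+1)" for v
  have TE: "T \<subseteq> E" using T(2) E_def by auto
  have fE: "finite E" unfolding E_def by simp
  have cE: "card E = n + 1" unfolding E_def using card_image[OF inj] by simp
  have sE: "(\<Sum>v\<in>E. v) = 0" unfolding E_def using sum.reindex[OF inj, of id] sz by simp
  have s1: "(\<Sum>v\<in>E. (if v \<in> T then U v else 0)) = s"
    unfolding s_def using sum.If_cases[OF fE, of "\<lambda>v. v \<in> T" U "\<lambda>_. 0"] TE
    by (simp add: Int_absorb1 inf_commute)
  have s2: "(\<Sum>v\<in>E. (if v \<in> T then U v else 0) *\<^sub>R v) = 0"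
  proof -
    have "(\<Sum>v\<in>E. (if v \<in> T then U v else 0) *\<^sub>R v) = (\<Sum>v\<in>E. (if v \<in> T then U v *\<^sub>R v else 0))"
      by (rule sum.cong) auto
    also have "\<dots> = (\<Sum>v\<in>T. U v *\<^sub>R v)"
      using sum.If_cases[OF fE, of "\<lambda>v. v \<in> T" "\<lambda>v. U v *\<^sub>R v" "\<lambda>_. 0"] TE
      by (simp add: Int_absorb1 inf_commute)
    finally show ?thesis using T(4) by simp
  qed
  have "sum b E = 0"
    unfolding b_def using s1 cE by (simp add: sum_subtractf)
  moreover have "(\<Sum>v\<in>E. b v *\<^sub>R v) = 0"
    unfolding b_def using s2 sE by (simp add: scaleR_diff_left sum_subtractf scaleR_sum_right[symmetric])
  moreover have "\<exists>v\<in>E. b v \<noteq> 0"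
  proof (rule ccontr)
    assume "\<not> ?thesis"
    then have all: "\<forall>v\<in>E. b v = 0" by simp
    have "e k \<notin> T" using T(2) inj k by (auto simp: inj_on_def)
    moreover have "e k \<in> E" using k E_def by simp
    ultimately have "b (e k) = 0" using all by simp
    then have "s / (n+1) = 0" using \<open>e k \<notin> T\<close> unfolding b_def by simp
    then have "s = 0" by simp
    have "\<forall>v\<in>T. U v = 0"
    proof
      fix v assume v: "v \<in> T"
      then have "b v = 0" using all TE by auto
      then show "U v = 0" using v \<open>s = 0\<close> unfolding b_def by simp
    qed
    then show False using T(3) by simp
  qed
  ultimately have "affine_dependent E"
    unfolding affine_dependent_explicit using fE by blast
  then show False using ind E_def by simp
qed


theorem proposition6p1:
  fixes e :: "nat \<Rightarrow> 'a::euclidean_space" and X :: "'a set" and p :: "'a"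
    and S :: "nat set" and lam mu :: "nat \<Rightarrow> real"
  defines "n \<equiv> DIM('a)"
  assumes simplex_inj: "inj_on e {0..n}"
    and simplex_indep: "\<not> affine_dependent (e ` {0..n})"
    and sum_zero: "(\<Sum>i=0..n. e i) = 0"
    and X_fin: "finite X"
    and X_nz: "0 \<notin> X"
    and E_sub: "e ` {0..n} \<subseteq> X"
    and no_pos_mult: "\<forall>p\<in>X. \<forall>q\<in>X. p \<noteq> q \<longrightarrow> \<not> (\<exists>c>0. p = c *\<^sub>R q)"
    and good: "\<forall>A\<subseteq>X. card A = n + 1 \<longrightarrow> good_position A"
    and p_in: "p \<in> X"
    and S_sub: "S \<subseteq> {0..n}"
    and S_supp: "p \<in> pos_hull (e ` S)"
    and S_min: "\<forall>T. T \<subset> S \<longrightarrow> p \<notin> pos_hull (e ` T)"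
    and lam_pos: "\<forall>i\<in>S. lam i > (0::real)"
    and lam_rep: "p = (\<Sum>i\<in>S. lam i *\<^sub>R e i)"
    and mu_def: "\<forall>i\<in>S. mu i = lam i / Min (lam ` S)"
  shows "card {i\<in>S. mu i \<noteq> 1} \<le> 1 \<and> (\<forall>j\<in>S. mu j \<noteq> 1 \<longrightarrow> mu j > 1)"
proof -
  have finS: "finite S" using S_sub finite_subset by blast
  have neS: "S \<noteq> {}" using lam_rep p_in X_nz by auto
  define m where "m = Min (lam ` S)"
  have "m \<in> lam ` S" unfolding m_def using finS neS by (intro Min_in) auto
  then obtain k where kS: "k \<in> S" and lk: "lam k = m" by auto
  have mpos: "m > 0" using lam_pos kS lk by auto
  have lge: "\<forall>i\<in>S. lam i \<ge> m" unfolding m_def using finS by auto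
  have mu_eq: "\<forall>i\<in>S. mu i = lam i / m" using mu_def m_def by simp
  have part2: "\<forall>j\<in>S. mu j \<noteq> 1 \<longrightarrow> mu j > 1"
  proof (intro ballI impI)
    fix j assume j: "j \<in> S" "mu j \<noteq> 1"
    have "lam j \<ge> m" using lge j by auto
    then have "mu j \<ge> 1" using mu_eq j mpos by simp
    then show "mu j > 1" using j by simp
  qed
  have part1: "card {i\<in>S. mu i \<noteq> 1} \<le> 1"
  proof (rule ccontr)
    assume "\<not> ?thesis"
    then obtain j1 j2 where j: "j1 \<in> S" "j2 \<in> S" "j1 \<noteq> j2" "mu j1 \<noteq> 1" "mu j2 \<noteq> 1"
      using card_le_Suc0_iff_eq[of "{i\<in>S. mu i \<noteq> 1}"] finS by auto
    have lj1: "lam j1 > m"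
    proof -
      have "lam j1 \<noteq> m" using j(1,4) mu_eq mpos by auto
      then show ?thesis using lge j(1) by force
    qed
    have lj2: "lam j2 > m"
    proof -
      have "lam j2 \<noteq> m" using j(2,5) mu_eq mpos by auto
      then show ?thesis using lge j(2) by force
    qed
    have kn: "k \<in> {0..n}" using kS S_sub by auto
    define I where "I = {0..n} - {k}"
    have j1I: "j1 \<in> I" using j lj1 lk S_sub unfolding I_def by auto
    have j2I: "j2 \<in> I" using j lj2 lk S_sub unfolding I_def by auto
    obtain i0 where i0: "i0 \<in> {0..n}" "i0 \<notin> S"
    proof (rule ccontr)
      assume "\<not> thesis"
      then have "\<forall>i\<in>{0..n}. i \<in> S" using that by blast
      then have Sfull: "S = {0..n}" using S_sub by blast
      define T where "T = S - {k}"
      have TS: "T \<subset> S" using kS T_def by auto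
      have injT: "inj_on e T" using simplex_inj Sfull T_def inj_on_subset by blast
      define c where "c v = lam (inv_into {0..n} e v) - m" for v
      have c_e: "c (e i) = lam i - m" if "i \<in> T" for i
        using that simplex_inj Sfull T_def unfolding c_def by (simp add: inv_into_f_f)
      have "(\<Sum>v\<in>e ` T. c v *\<^sub>R v) = (\<Sum>i\<in>T. c (e i) *\<^sub>R e i)"
        using sum.reindex[OF injT, of "\<lambda>v. c v *\<^sub>R v"] by simp
      also have "\<dots> = (\<Sum>i\<in>T. (lam i - m) *\<^sub>R e i)"
        using c_e by simp
      also have "\<dots> = (\<Sum>i\<in>S. (lam i - m) *\<^sub>R e i)"
        using sum.remove[OF finS kS, of "\<lambda>i. (lam i - m) *\<^sub>R e i"] lk T_def by simp
      also have "\<dots> = p - m *\<^sub>R (\<Sum>i\<in>S. e i)"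
        unfolding lam_rep by (simp add: scaleR_diff_left sum_subtractf scaleR_sum_right)
      also have "\<dots> = p" using sum_zero Sfull by simp
      finally have "p \<in> pos_hull (e ` T)"
        unfolding pos_hull_def
      proof -
        assume eq: "(\<Sum>v\<in>e ` T. c v *\<^sub>R v) = p"
        have "\<forall>v\<in>e ` T. c v \<ge> 0" using c_e lge T_def by auto
        then show "p \<in> {\<Sum>a\<in>e ` T. c a *\<^sub>R a |c. \<forall>a\<in>e ` T. 0 \<le> c a}"
          using eq by blast
      qed
      then show False using S_min TS by blast
    qed
    have i0I: "i0 \<in> I" using i0 kS unfolding I_def by auto
    have indep: "independent (e ` I)"
      unfolding I_def by (rule indep_lemma[OF simplex_inj simplex_indep sum_zero kn])
    have "\<forall>i\<in>I. \<exists>g::'a\<Rightarrow>real. linear g \<and> (\<forall>x\<in>e ` I. g x = (if x = e i then 1 else 0))"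
      by (intro ballI linear_independent_extend[OF indep])
    then have "\<exists>\<phi>. \<forall>i\<in>I. linear (\<phi> i) \<and> (\<forall>x\<in>e ` I. \<phi> i x = (if x = e i then (1::real) else 0))"
      by (rule bchoice)
    then obtain \<phi> :: "nat \<Rightarrow> 'a \<Rightarrow> real" where
      phi: "\<forall>i\<in>I. linear (\<phi> i) \<and> (\<forall>x\<in>e ` I. \<phi> i x = (if x = e i then 1 else 0))"
      by blast
    have lin: "linear (\<phi> i)" if "i \<in> I" for i using phi that by blast
    have phi_e: "\<phi> i (e l) = (if l = i then 1 else 0)" if "i \<in> I" "l \<in> I" for i l
    proof -
      have "\<phi> i (e l) = (if e l = e i then 1 else 0)" using phi that by blast
      moreover have "e l = e i \<longleftrightarrow> l = i" using simplex_inj that unfolding I_def inj_on_def by blast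
      ultimately show ?thesis by simp
    qed
    have finI: "finite I" unfolding I_def by simp
    have phi_k: "\<phi> i (e k) = -1" if "i \<in> I" for i
    proof -
      have "(\<Sum>l=0..n. e l) = e k + (\<Sum>l\<in>I. e l)"
        using sum.remove[of "{0..n}" k e] kn unfolding I_def by simp
      then have "0 = \<phi> i (e k + (\<Sum>l\<in>I. e l))" using sum_zero linear_0[OF lin[OF that]] by simp
      also have "\<dots> = \<phi> i (e k) + (\<Sum>l\<in>I. \<phi> i (e l))"
        using linear_add[OF lin[OF that]] linear_sum[OF lin[OF that]] by simp
      also have "(\<Sum>l\<in>I. \<phi> i (e l)) = (\<Sum>l\<in>I. (if l = i then 1 else 0))"
        using phi_e[OF that] by simp
      also have "\<dots> = 1" using that finI by simp
      finally show ?thesis by simp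
    qed
    define cc where "cc i = \<phi> i p" for i
    have cc_val: "cc i = (if i \<in> S then lam i else 0) - m" if iI: "i \<in> I" for i
    proof -
      have Sk: "S = insert k (S - {k})" using kS by auto
      have "p = lam k *\<^sub>R e k + (\<Sum>l\<in>S - {k}. lam l *\<^sub>R e l)"
        using lam_rep sum.remove[OF finS kS, of "\<lambda>l. lam l *\<^sub>R e l"] by simp
      then have "cc i = \<phi> i (lam k *\<^sub>R e k) + (\<Sum>l\<in>S - {k}. \<phi> i (lam l *\<^sub>R e l))"
        unfolding cc_def using linear_add[OF lin[OF iI]] linear_sum[OF lin[OF iI]] by simp
      also have "\<dots> = - m + (\<Sum>l\<in>S - {k}. lam l * (if l = i then 1 else 0))"
      proof -
        have ph: "\<forall>l\<in>S - {k}. \<phi> i (e l) = (if l = i then 1 else 0)"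
          using phi_e[OF iI] S_sub unfolding I_def by auto
        have "(\<Sum>l\<in>S - {k}. \<phi> i (lam l *\<^sub>R e l)) = (\<Sum>l\<in>S - {k}. lam l * (if l = i then 1 else 0))"
          by (rule sum.cong) (use ph linear_scale[OF lin[OF iI]] in auto)
        then show ?thesis using linear_scale[OF lin[OF iI]] phi_k[OF iI] lk by simp
      qed
      also have "(\<Sum>l\<in>S - {k}. lam l * (if l = i then 1 else 0)) = (if i \<in> S then lam i else 0)"
      proof -
        have "(\<Sum>l\<in>S - {k}. lam l * (if l = i then 1 else 0)) = (\<Sum>l\<in>S - {k}. if l = i then lam l else 0)"
          by (rule sum.cong) auto
        also have "\<dots> = (if i \<in> S - {k} then lam i else 0)" using finS by (simp add: sum.delta')
        finally show ?thesis using iI I_def by auto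
      qed
      finally show ?thesis by simp
    qed
    have c1: "cc j1 > 0" using cc_val[OF j1I] j lj1 by simp
    have c2: "cc j2 > 0" using cc_val[OF j2I] j lj2 by simp
    have c0: "cc i0 = - m" using cc_val[OF i0I] i0 by simp
    define A where "A = insert p (e ` I)"
    have finA: "finite A" unfolding A_def using finI by simp
    have pnot: "p \<notin> e ` I"
    proof
      assume "p \<in> e ` I"
      then obtain i where i: "i \<in> I" "p = e i" by auto
      have "cc j1 = (if i = j1 then 1 else 0)" using phi_e[OF j1I i(1)] i unfolding cc_def by simp
      then have "i = j1" using c1 by (auto split: if_splits)
      have "cc j2 = (if i = j2 then 1 else 0)" using phi_e[OF j2I i(1)] i unfolding cc_def by simp
      then have "i = j2" using c2 by (auto split: if_splits)
      then show False using \<open>i = j1\<close> j by simp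
    qed
    have cardI: "card I = n" unfolding I_def using kn by simp
    have cardA: "card A = n + 1"
      unfolding A_def using pnot finI cardI card_image[OF inj_on_subset[OF simplex_inj]] I_def by auto
    have AX: "A \<subseteq> X" unfolding A_def using p_in E_sub I_def by auto
    have "conical_position A"
      unfolding conical_position_def
    proof (intro conjI ballI)
      show "finite A" by (rule finA)
      show "0 \<notin> convex hull A"
      proof (rule conv_sep[OF finA], rule ballI)
        fix a assume "a \<in> A"
        then consider "a = p" | i where "i \<in> I" "a = e i" unfolding A_def by auto
        then show "\<exists>f::'a\<Rightarrow>real. linear f \<and> f a > 0 \<and> (\<forall>b\<in>A. f b \<ge> 0)"
        proof cases
          case 1
          have "\<forall>b\<in>A. \<phi> j1 b \<ge> 0"
            unfolding A_def using c1 phi_e[OF j1I] unfolding cc_def by auto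
          then show ?thesis using 1 lin[OF j1I] c1 unfolding cc_def by blast
        next
          case (2 i)
          define t where "t = \<bar>cc i\<bar> / cc j1"
          have t0: "t \<ge> 0" unfolding t_def using c1 by simp
          define f where "f x = \<phi> i x + t *\<^sub>R \<phi> j1 x" for x
          have linf: "linear f" unfolding f_def
            by (intro real_vector.module_hom_add real_vector.module_hom_scale lin 2(1) j1I)
          have fe: "f (e l) = (if l = i then 1 else 0) + t * (if l = j1 then 1 else 0)" if "l \<in> I" for l
            unfolding f_def using phi_e[OF 2(1) that] phi_e[OF j1I that] by simp
          have fp: "f p = cc i + \<bar>cc i\<bar>" unfolding f_def t_def cc_def using c1 unfolding cc_def by simp
          have "\<forall>b\<in>A. f b \<ge> 0" unfolding A_def using fe fp t0 by auto
          moreover have "f a > 0" using fe[OF 2(1)] 2 t0 by simp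
          ultimately show ?thesis using linf by blast
        qed
      qed
      fix a assume "a \<in> A"
      then consider "a = p" | i where "i \<in> I" "a = e i" unfolding A_def by auto
      then show "a \<notin> pos_hull (A - {a})"
      proof cases
        case 1
        define f where "f x = (-1) *\<^sub>R \<phi> i0 x" for x
        have linf: "linear f" unfolding f_def
          by (intro real_vector.module_hom_scale lin i0I)
        have "f p > 0" unfolding f_def using c0 mpos unfolding cc_def by simp
        moreover have "\<forall>b\<in>A - {a}. f b \<le> 0"
          unfolding A_def f_def using 1 phi_e[OF i0I] by (auto split: if_splits)
        ultimately show ?thesis using pos_hull_sep[OF linf] 1 by blast
      next
        case (2 i)
        show ?thesis
        proof (cases "cc i \<le> 0")
          case True
          have "\<forall>b\<in>A - {a}. \<phi> i b \<le> 0"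
          proof
            fix b assume b: "b \<in> A - {a}"
            then consider "b = p" | l where "l \<in> I" "b = e l" "l \<noteq> i" unfolding A_def using 2 by auto
            then show "\<phi> i b \<le> 0"
            proof cases
              case 1 then show ?thesis using True unfolding cc_def by simp
            next
              case (2 l) then show ?thesis using phi_e[OF \<open>i \<in> I\<close>] by simp
            qed
          qed
          moreover have "\<phi> i a > 0" using 2 phi_e[OF 2(1) 2(1)] by simp
          ultimately show ?thesis using pos_hull_sep[OF lin[OF 2(1)]] by blast
        next
          case False
          obtain j' where j': "j' \<in> I" "j' \<noteq> i" "cc j' > 0"
          proof (cases "i = j1")
            case True then show ?thesis using that[of j2] j2I c2 j(3) by simp
          next
            case False then show ?thesis using that[of j1] j1I c1 by simp
          qed
          define t where "t = - cc i / cc j'"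
          define f where "f x = \<phi> i x + t *\<^sub>R \<phi> j' x" for x
          have t0: "t \<le> 0" unfolding t_def using False j'(3) by simp
          have linf: "linear f" unfolding f_def
            by (intro real_vector.module_hom_add real_vector.module_hom_scale lin 2(1) j'(1))
          have fe: "f (e l) = (if l = i then 1 else 0) + t * (if l = j' then 1 else 0)" if "l \<in> I" for l
            unfolding f_def using phi_e[OF 2(1) that] phi_e[OF j'(1) that] by simp
          have fp: "f p = 0" unfolding f_def t_def using j'(3) unfolding cc_def by simp
          have "\<forall>b\<in>A - {a}. f b \<le> 0"
          proof
            fix b assume b: "b \<in> A - {a}"
            then consider "b = p" | l where "l \<in> I" "b = e l" "l \<noteq> i" unfolding A_def using 2 by auto
            then show "f b \<le> 0"
            proof cases
              case 1 then show ?thesis using fp by simp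
            next
              case (2 l) then show ?thesis using fe[OF 2(1)] t0 by simp
            qed
          qed
          moreover have "f a > 0" using 2 fe[OF 2(1)] j'(2) by simp
          ultimately show ?thesis using pos_hull_sep[OF linf] by blast
        qed
      qed
    qed
    moreover have "good_position A" using good AX cardA by blast
    ultimately show False unfolding good_position_def by simp
  qed
  show ?thesis using part1 part2 by simp
qed

end
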